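(* Fix $\boldsymbol{x}\in\mathcal{R}_r$ and consider the second-order cone program, in the variable $(\boldsymbol{u},d,t)\in\mathbb{R}^m\times\mathbb{R}\times\mathbb{R}$, $$\min\ t\quad\text{s.t.}\quad \Big\|E\begin{bmatrix}\boldsymbol{u}\\ d\end{bmatrix}\Big\|_2\le t,\qquad \hat{\dot V}(\boldsymbol{x},\boldsymbol{u})+m_r^V+\beta_r\sigma_r^V+\lambda V(\boldsymbol{x})\le d,\qquad \|A_r^h(\boldsymbol{x})\boldsymbol{u}+\boldsymbol{b}_r^h(\boldsymbol{x})\|_2\le \boldsymbol{c}_r^h(\boldsymbol{x})\boldsymbol{u}+d_r^h(\boldsymbol{x}),$$ with $E=\operatorname{diag}(1,\dots,1,\sqrt\rho)$. If this program is feasible, then $$1-\frac{1}{\beta_r^2}\boldsymbol{\phi}_r\,\Sigma_r^h(\boldsymbol{x})^{-1}\boldsymbol{\phi}_r^T\le 0,\qquad\text{where } \boldsymbol{\phi}_r=\begin{bmatrix}\varphi_r^{hf}+\mu_r^{h1} & \boldsymbol{c}_r^h(\boldsymbol{x})\end{bmatrix}\in\mathbb{R}^{1\times(m+1)}.$$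
   Context: Setting: switching system $\dot{\boldsymbol{x}}=\sum_{r=1}^R\delta_r(f_r(\boldsymbol{x})+g_r(\boldsymbol{x})\boldsymbol{u})$, $\boldsymbol{x}\in\mathcal{X}\subset\mathbb{R}^n$, $\boldsymbol{u}\in\mathbb{R}^m$, with pairwise disjoint regions $\mathcal{R}_r$ covering $\mathcal{X}$ and $\delta_r$ the indicator of $\mathcal{R}_r$; nominal model $\dot{\boldsymbol{x}}=\hat f(\boldsymbol{x})+\hat g(\boldsymbol{x})\boldsymbol{u}$; continuously differentiable CLF $V$ and CBF $h$ with nominal derivative $\hat{\dot V}=L_{\hat f}V+L_{\hat g}V\boldsymbol{u}$; constants $\rho>0$, $\lambda>0$, $\beta_r>0$. Write $\boldsymbol{y}=[1,\boldsymbol{u}^T]^T$. For region $r$, Gaussian-process posteriors (zero prior mean, kernel $\boldsymbol{y}^T\operatorname{diag}(k_r^1(\boldsymbol{x},\boldsymbol{x}'),\dots,k_r^{m+1}(\boldsymbol{x},\boldsymbol{x}'))\boldsymbol{y}'$ with positive-definite base kernels, noise variance $\sigma_n^2>0$) give for the CLF residual a mean $m_r^V=\boldsymbol{\mu}_r^V(\boldsymbol{x})\boldsymbol{y}$ and standard deviation $\sigma_r^V=\sqrt{\boldsymbol{y}^T\Sigma_r^V(\boldsymbol{x})\boldsymbol{y}}$, and for the CBF residual a mean $\boldsymbol{\mu}_r^h(\boldsymbol{x})\boldsymbol{y}$ ($\boldsymbol{\mu}_r^h\in\mathbb{R}^{1\times(m+1)}$) and standard deviation $\sqrt{\boldsymbol{y}^T\Sigma_r^h(\boldsymbol{x})\boldsymbol{y}}$,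 where the posterior covariance matrix $\Sigma_r^h(\boldsymbol{x})=\Lambda_r(\boldsymbol{x},\boldsymbol{x})-\bar K_r(K_r+\sigma_n^2I)^{-1}\bar K_r^T$ is taken (as in the paper) to be symmetric positive definite. Write $\mu_r^{h1}$ for the first entry and $\boldsymbol{\mu}_r^{hm}$ for the last $m$ entries of $\boldsymbol{\mu}_r^h$. Let $L_r$ satisfy $L_r^TL_r=\Sigma_r^h(\boldsymbol{x})$, with first column $\boldsymbol{l}_r^1$ and last $m$ columns $L_r^m$. Let $\boldsymbol{\varphi}_r^h=[L_{f_r}h-L_{\hat f}h,\ L_{g_r}h-L_{\hat g}h]\in\mathbb{R}^{1\times(m+1)}$ with first entry $\varphi_r^{hf}$ and last $m$ entries $\boldsymbol{\varphi}_r^{hg}$. Define $A_r^h=\beta_rL_r^m$, $\boldsymbol{b}_r^h=\beta_r\boldsymbol{l}_r^1$, $\boldsymbol{c}_r^h=\boldsymbol{\varphi}_r^{hg}+\boldsymbol{\mu}_r^{hm}$, $d_r^h=\varphi_r^{hf}+\mu_r^{h1}$. *)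

theory Defs
  imports "Jordan_Normal_Form.Gauss_Jordan_Elimination"
begin

definition vnorm2 :: "real vec \<Rightarrow> real" where
  "vnorm2 v = sqrt (v \<bullet> v)"

definition yvec :: "real vec \<Rightarrow> real vec" where
  "yvec u = vCons 1 u"

definition first_col :: "real mat \<Rightarrow> real vec" where
  "first_col L = col L 0"

definition last_cols :: "nat \<Rightarrow> real mat \<Rightarrow> real mat" where
  "last_cols m L = mat (dim_row L) m (\<lambda>(i, j). L $$ (i, j + 1))"

definition first_entry :: "real vec \<Rightarrow> real" where
  "first_entry v = v $ 0"

definition last_entries :: "nat \<Rightarrow> real vec \<Rightarrow> real vec" where
  "last_entries m v = vec m (\<lambda>i. v $ (i + 1))"

(* A_r^h = beta_r L_r^m, b_r^h = beta_r l_r^1,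
   c_r^h = phi_r^{hg} + mu_r^{hm}, d_r^h = phi_r^{hf} + mu_r^{h1} *)
definition A_h :: "nat \<Rightarrow> real \<Rightarrow> real mat \<Rightarrow> real mat" where
  "A_h m \<beta> L = \<beta> \<cdot>\<^sub>m last_cols m L"

definition b_h :: "real \<Rightarrow> real mat \<Rightarrow> real vec" where
  "b_h \<beta> L = \<beta> \<cdot>\<^sub>v first_col L"

definition c_h :: "nat \<Rightarrow> real vec \<Rightarrow> real vec \<Rightarrow> real vec" where
  "c_h m \<phi>h \<mu>h = last_entries m \<phi>h + last_entries m \<mu>h"

definition d_h :: "real vec \<Rightarrow> real vec \<Rightarrow> real" where
  "d_h \<phi>h \<mu>h = first_entry \<phi>h + first_entry \<mu>h"

definition E_mat :: "nat \<Rightarrow> real \<Rightarrow> real mat" where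
  "E_mat m \<rho> = mat (m + 1) (m + 1)
     (\<lambda>(i, j). if i = j then (if i = m then sqrt \<rho> else 1) else 0)"

definition sym_pos_def :: "nat \<Rightarrow> real mat \<Rightarrow> bool" where
  "sym_pos_def n S \<longleftrightarrow> S \<in> carrier_mat n n \<and> S\<^sup>T = S \<and>
     (\<forall>v \<in> carrier_vec n. v \<noteq> 0\<^sub>v n \<longrightarrow> v \<bullet> (S *\<^sub>v v) > 0)"

definition sym_pos_semidef :: "nat \<Rightarrow> real mat \<Rightarrow> bool" where
  "sym_pos_semidef n S \<longleftrightarrow> S \<in> carrier_mat n n \<and> S\<^sup>T = S \<and>
     (\<forall>v \<in> carrier_vec n. v \<bullet> (S *\<^sub>v v) \<ge> 0)"

definition socp_feasible where
  "socp_feasible m \<rho> lam \<beta> LfV LgV Vx \<mu>V \<Sigma>V L \<phi>h \<mu>h \<longleftrightarrow>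
    (\<exists>u \<in> carrier_vec m. \<exists>d t :: real.
       vnorm2 (E_mat m \<rho> *\<^sub>v (u @\<^sub>v vec 1 (\<lambda>_. d))) \<le> t
     \<and> LfV + LgV \<bullet> u + \<mu>V \<bullet> yvec u + \<beta> * sqrt (yvec u \<bullet> (\<Sigma>V *\<^sub>v yvec u)) + lam * Vx \<le> d
     \<and> vnorm2 (A_h m \<beta> L *\<^sub>v u + b_h \<beta> L) \<le> c_h m \<phi>h \<mu>h \<bullet> u + d_h \<phi>h \<mu>h)"

end

theory Submission
  imports Defs "Jordan_Normal_Form.Determinant"
begin

lemma cs_sum:
  fixes f g :: "nat \<Rightarrow> real"
  assumes fin: "finite A"
  shows "(\<Sum>i\<in>A. f i * g i)\<^sup>2 \<le> (\<Sum>i\<in>A. f i * f i) * (\<Sum>i\<in>A. g i * g i)"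
proof -
  define a where "a = (\<Sum>i\<in>A. f i * f i)"
  define b where "b = (\<Sum>i\<in>A. f i * g i)"
  define c where "c = (\<Sum>i\<in>A. g i * g i)"
  have q: "0 \<le> t*t*a - 2*t*b + c" for t
  proof -
    have "0 \<le> (\<Sum>i\<in>A. (t * f i - g i) * (t * f i - g i))"
      by (rule sum_nonneg) auto
    also have "\<dots> = t*t*a - 2*t*b + c"
      unfolding a_def b_def c_def
      by (simp add: algebra_simps sum.distrib sum_distrib_left sum_subtractf)
    finally show ?thesis .
  qed
  have a0: "a \<ge> 0" unfolding a_def by (rule sum_nonneg) auto
  show ?thesis
  proof (cases "a = 0")
    case True
    have "\<forall>i\<in>A. f i * f i = 0"
      using True fin unfolding a_def by (subst (asm) sum_nonneg_eq_0_iff) auto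
    then have "b = 0" unfolding b_def by simp
    then show ?thesis using True unfolding a_def b_def c_def by simp
  next
    case False
    then have ap: "a > 0" using a0 by simp
    have "0 \<le> (b/a)*(b/a)*a - 2*(b/a)*b + c" by (rule q)
    also have "\<dots> = c - b*b/a" using ap by (simp add: field_simps)
    finally have "b*b/a \<le> c" by simp
    then have "b*b \<le> c * a" using ap by (simp add: field_simps)
    then show ?thesis unfolding a_def b_def c_def by (simp add: power2_eq_square algebra_simps)
  qed
qed

lemma cs_vec:
  fixes a b :: "real vec"
  assumes "a \<in> carrier_vec n" "b \<in> carrier_vec n"
  shows "(a \<bullet> b)\<^sup>2 \<le> (a \<bullet> a) * (b \<bullet> b)"
  using assms cs_sum[of "{0..<n}" "\<lambda>i. a $ i" "\<lambda>i. b $ i"]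
  unfolding scalar_prod_def by simp

theorem corollary2:
  fixes m :: nat and \<rho> lam \<beta> LfV Vx :: real
    and LgV \<mu>V \<phi>h \<mu>h :: "real vec" and \<Sigma>V \<Sigma>h L :: "real mat"
  assumes "\<rho> > 0" and "lam > 0" and "\<beta> > 0"
    and "LgV \<in> carrier_vec m" and "\<mu>V \<in> carrier_vec (m + 1)"
    and "sym_pos_semidef (m + 1) \<Sigma>V"
    and "\<phi>h \<in> carrier_vec (m + 1)" and "\<mu>h \<in> carrier_vec (m + 1)"
    and "sym_pos_def (m + 1) \<Sigma>h"
    and "L \<in> carrier_mat (m + 1) (m + 1)" and "L\<^sup>T * L = \<Sigma>h"
    and "socp_feasible m \<rho> lam \<beta> LfV LgV Vx \<mu>V \<Sigma>V L \<phi>h \<mu>h"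
  shows "1 - (1 / \<beta>\<^sup>2) *
           (vCons (first_entry \<phi>h + first_entry \<mu>h) (c_h m \<phi>h \<mu>h)
            \<bullet> (the (mat_inverse \<Sigma>h)
                 *\<^sub>v vCons (first_entry \<phi>h + first_entry \<mu>h) (c_h m \<phi>h \<mu>h))) \<le> 0"
proof -
  note bpos = assms(3)
  note Lc = assms(10)
  define S where "S = \<Sigma>h"
  have Sc: "S \<in> carrier_mat (m+1) (m+1)" and Spd: "\<And>v. v \<in> carrier_vec (m+1) \<Longrightarrow> v \<noteq> 0\<^sub>v (m+1) \<Longrightarrow> v \<bullet> (S *\<^sub>v v) > 0"
    using assms(9) unfolding sym_pos_def_def S_def by auto
  have LS: "L\<^sup>T * L = S" using assms(11) S_def by simp
  from assms(12) obtain u d t where uc: "u \<in> carrier_vec m"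
    and ineq: "vnorm2 (A_h m \<beta> L *\<^sub>v u + b_h \<beta> L) \<le> c_h m \<phi>h \<mu>h \<bullet> u + d_h \<phi>h \<mu>h"
    unfolding socp_feasible_def by blast
  define y where "y = yvec u"
  have yc: "y \<in> carrier_vec (m+1)" using uc unfolding y_def yvec_def by simp
  define \<phi> where "\<phi> = vCons (first_entry \<phi>h + first_entry \<mu>h) (c_h m \<phi>h \<mu>h)"
  have cc: "c_h m \<phi>h \<mu>h \<in> carrier_vec m" unfolding c_h_def last_entries_def by simp
  have \<phi>c: "\<phi> \<in> carrier_vec (m+1)" using cc unfolding \<phi>_def by simp
  have rhs: "c_h m \<phi>h \<mu>h \<bullet> u + d_h \<phi>h \<mu>h = \<phi> \<bullet> y"
    unfolding \<phi>_def y_def yvec_def d_h_def by simp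
  have rowL: "row L i = vCons (L $$ (i,0)) (row (last_cols m L) i)" if "i < m+1" for i
    apply (rule eq_vecI)
    using Lc that by (auto simp: vec_index_vCons last_cols_def)
  have lhs: "A_h m \<beta> L *\<^sub>v u + b_h \<beta> L = \<beta> \<cdot>\<^sub>v (L *\<^sub>v y)"
  proof (rule eq_vecI)
    fix i assume "i < dim_vec (\<beta> \<cdot>\<^sub>v (L *\<^sub>v y))"
    then have i: "i < m+1" using Lc by simp
    show "(A_h m \<beta> L *\<^sub>v u + b_h \<beta> L) $ i = (\<beta> \<cdot>\<^sub>v (L *\<^sub>v y)) $ i"
      using i Lc uc rowL[OF i]
      by (simp add: A_h_def b_h_def first_col_def y_def yvec_def last_cols_def algebra_simps)
  qed (use Lc in \<open>simp add: A_h_def b_h_def first_col_def last_cols_def\<close>)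
  have Ly: "L *\<^sub>v y \<in> carrier_vec (m+1)" using Lc yc by simp
  have quad: "(L *\<^sub>v w) \<bullet> (L *\<^sub>v v) = w \<bullet> (S *\<^sub>v v)" if "w \<in> carrier_vec (m+1)" "v \<in> carrier_vec (m+1)" for w v
  proof -
    have "(L *\<^sub>v w) \<bullet> (L *\<^sub>v v) = (L\<^sup>T *\<^sub>v (L *\<^sub>v v)) \<bullet> w"
      using transpose_vec_mult_scalar[OF Lc that(1), of "L *\<^sub>v v"] that Lc
      by (metis comm_scalar_prod mult_mat_vec_carrier)
    also have "L\<^sup>T *\<^sub>v (L *\<^sub>v v) = S *\<^sub>v v" using LS Lc that
      by (metis assoc_mult_mat_vec carrier_matD(1) carrier_matD(2) carrier_mat_triv index_transpose_mat(3))
    also have "(S *\<^sub>v v) \<bullet> w = w \<bullet> (S *\<^sub>v v)"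
      using Sc that by (metis comm_scalar_prod mult_mat_vec_carrier)
    finally show ?thesis .
  qed
  define q where "q = y \<bullet> (S *\<^sub>v y)"
  have "y \<noteq> 0\<^sub>v (m+1)"
  proof
    assume "y = 0\<^sub>v (m+1)"
    then have "y $ 0 = 0" by simp
    then show False unfolding y_def yvec_def by simp
  qed
  then have qpos: "q > 0" unfolding q_def using Spd yc by simp
  have "vnorm2 (\<beta> \<cdot>\<^sub>v (L *\<^sub>v y)) = \<beta> * sqrt q"
    unfolding vnorm2_def q_def using quad[OF yc yc] bpos Ly
    by (simp add: real_sqrt_mult power2_eq_square[symmetric])
  then have k: "\<beta> * sqrt q \<le> \<phi> \<bullet> y" using ineq lhs rhs by simp
  have k2: "\<beta>\<^sup>2 * q \<le> (\<phi> \<bullet> y)\<^sup>2"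
  proof -
    have "(\<beta> * sqrt q)\<^sup>2 \<le> (\<phi> \<bullet> y)\<^sup>2"
      using k bpos qpos by (intro power_mono) auto
    then show ?thesis using qpos by (simp add: power_mult_distrib)
  qed
  have "det S \<noteq> 0"
  proof
    assume "det S = 0"
    then obtain v where "v \<in> carrier_vec (m+1)" "v \<noteq> 0\<^sub>v (m+1)" "S *\<^sub>v v = 0\<^sub>v (m+1)"
      using det_0_iff_vec_prod_zero[OF Sc] by blast
    then show False using Spd[of v] by simp
  qed
  then have U: "S \<in> Units (ring_mat TYPE(real) (m+1) ())"
    by (rule det_non_zero_imp_unit[OF Sc])
  have "mat_inverse S \<noteq> None"
  proof
    assume "mat_inverse S = None"
    from mat_inverse(1)[OF Sc this, of "()"] U show False by blast
  qed
  then obtain B where B: "mat_inverse S = Some B" by auto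
  from mat_inverse(2)[OF Sc B] have SB: "S * B = 1\<^sub>m (m+1)" and Bc: "B \<in> carrier_mat (m+1) (m+1)" by auto
  define z where "z = B *\<^sub>v \<phi>"
  have zc: "z \<in> carrier_vec (m+1)" using Bc \<phi>c unfolding z_def by simp
  have Sz: "S *\<^sub>v z = \<phi>"
  proof -
    have "S *\<^sub>v z = (S * B) *\<^sub>v \<phi>" unfolding z_def
      using assoc_mult_mat_vec[OF Sc Bc \<phi>c] by simp
    also have "\<dots> = \<phi>" using SB \<phi>c by simp
    finally show ?thesis .
  qed
  have Lz: "L *\<^sub>v z \<in> carrier_vec (m+1)" using Lc zc by simp
  have e1: "\<phi> \<bullet> y = (L *\<^sub>v z) \<bullet> (L *\<^sub>v y)"
    using quad[OF zc yc] Sz comm_scalar_prod[OF \<phi>c yc] quad[OF yc zc] comm_scalar_prod[OF Ly Lz] by simp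
  have e2: "\<phi> \<bullet> z = (L *\<^sub>v z) \<bullet> (L *\<^sub>v z)"
    using quad[OF zc zc] Sz comm_scalar_prod[OF \<phi>c zc] by simp
  have cs: "((L *\<^sub>v z) \<bullet> (L *\<^sub>v y))\<^sup>2 \<le> ((L *\<^sub>v z) \<bullet> (L *\<^sub>v z)) * ((L *\<^sub>v y) \<bullet> (L *\<^sub>v y))"
    by (rule cs_vec[OF Lz Ly])
  have "(\<phi> \<bullet> y)\<^sup>2 \<le> (\<phi> \<bullet> z) * q"
    using cs unfolding e1 e2 q_def quad[OF yc yc] .
  with k2 have "\<beta>\<^sup>2 * q \<le> (\<phi> \<bullet> z) * q" by linarith
  then have "\<beta>\<^sup>2 \<le> \<phi> \<bullet> z" using qpos by simp
  then have fin: "1 \<le> (1/\<beta>\<^sup>2) * (\<phi> \<bullet> z)" using bpos by (simp add: field_simps)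
  have "the (mat_inverse \<Sigma>h) = B" using B S_def by simp
  then show ?thesis using fin unfolding \<phi>_def z_def by simp
qed

end
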